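(* Let $X$ be a distance-regular graph of diameter $d\geq 2$, degree $k$ and $\mu=c_2$. Then every pair of distinct vertices $u,v$ of $X$ is distinguished by at least $k-\mu$ vertices, i.e. there are at least $k-\mu$ vertices $x$ with $\mathrm{dist}(x,u)\neq\mathrm{dist}(x,v)$.
   Context: A connected graph $X$ of diameter $d$ is distance-regular if there are integers $a_i,b_i,c_i$ ($0\le i\le d$) such that for all vertices $v,w$ with $\mathrm{dist}(v,w)=i$, $w$ has exactly $c_i$ neighbours at distance $i-1$, $a_i$ at distance $i$, $b_i$ at distance $i+1$ from $v$; $X$ is $k$-regular with $k=b_0$, and $\mu=c_2$ is the number of common neighbours of two vertices at distance 2. *)

theory Defs
  imports Main
begin

definition simple_graph :: "'a set \<Rightarrow> ('a \<Rightarrow> 'a \<Rightarrow> bool) \<Rightarrow> bool" where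
  "simple_graph V E \<longleftrightarrow> finite V \<and> V \<noteq> {} \<and>
     (\<forall>x y. E x y \<longrightarrow> x \<in> V \<and> y \<in> V) \<and>
     (\<forall>x y. E x y \<longrightarrow> E y x) \<and> (\<forall>x. \<not> E x x)"

definition is_walk :: "'a set \<Rightarrow> ('a \<Rightarrow> 'a \<Rightarrow> bool) \<Rightarrow> 'a \<Rightarrow> 'a \<Rightarrow> nat \<Rightarrow> bool" where
  "is_walk V E u v n \<longleftrightarrow> (\<exists>p :: nat \<Rightarrow> 'a. p 0 = u \<and> p n = v \<and> (\<forall>i\<le>n. p i \<in> V) \<and>
       (\<forall>i<n. E (p i) (p (Suc i))))"

definition connected_graph :: "'a set \<Rightarrow> ('a \<Rightarrow> 'a \<Rightarrow> bool) \<Rightarrow> bool" where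
  "connected_graph V E \<longleftrightarrow> (\<forall>u\<in>V. \<forall>v\<in>V. \<exists>n. is_walk V E u v n)"

text \<open>Graph distance (meaningful for connected graphs).\<close>
definition gdist :: "'a set \<Rightarrow> ('a \<Rightarrow> 'a \<Rightarrow> bool) \<Rightarrow> 'a \<Rightarrow> 'a \<Rightarrow> nat" where
  "gdist V E u v = (LEAST n. is_walk V E u v n)"

definition diameter :: "'a set \<Rightarrow> ('a \<Rightarrow> 'a \<Rightarrow> bool) \<Rightarrow> nat" where
  "diameter V E = Max {gdist V E u v | u v. u \<in> V \<and> v \<in> V}"

definition distance_regular ::
  "'a set \<Rightarrow> ('a \<Rightarrow> 'a \<Rightarrow> bool) \<Rightarrow> nat \<Rightarrow> (nat \<Rightarrow> nat) \<Rightarrow> (nat \<Rightarrow> nat) \<Rightarrow> (nat \<Rightarrow> nat) \<Rightarrow> bool" where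
  "distance_regular V E d a b c \<longleftrightarrow>
     simple_graph V E \<and> connected_graph V E \<and> diameter V E = d \<and>
     (\<forall>i\<le>d. \<forall>v\<in>V. \<forall>w\<in>V. gdist V E v w = i \<longrightarrow>
        card {x\<in>V. E w x \<and> gdist V E v x + 1 = i} = c i \<and>
        card {x\<in>V. E w x \<and> gdist V E v x = i} = a i \<and>
        card {x\<in>V. E w x \<and> gdist V E v x = i + 1} = b i)"

end

theory Submission
  imports Defs
begin

lemma walk_ext: "is_walk V E u y n \<Longrightarrow> E y z \<Longrightarrow> z \<in> V \<Longrightarrow> is_walk V E u z (Suc n)"
  unfolding is_walk_def
proof -
  assume "\<exists>p. p 0 = u \<and> p n = y \<and> (\<forall>i\<le>n. p i \<in> V) \<and> (\<forall>i<n. E (p i) (p (Suc i)))"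
    and e: "E y z" and z: "z \<in> V"
  then obtain p where p: "p 0 = u" "p n = y" "\<forall>i\<le>n. p i \<in> V" "\<forall>i<n. E (p i) (p (Suc i))" by blast
  show "\<exists>p. p 0 = u \<and> p (Suc n) = z \<and> (\<forall>i\<le>Suc n. p i \<in> V) \<and> (\<forall>i<Suc n. E (p i) (p (Suc i)))"
    apply (rule exI[of _ "p(Suc n := z)"])
    using p e z by (auto simp: le_Suc_eq less_Suc_eq)
qed

lemma gdist_le: "is_walk V E u v n \<Longrightarrow> gdist V E u v \<le> n"
  by (simp add: gdist_def Least_le)

lemma walk_gdist: "connected_graph V E \<Longrightarrow> u \<in> V \<Longrightarrow> v \<in> V \<Longrightarrow> is_walk V E u v (gdist V E u v)"
  unfolding gdist_def connected_graph_def by (meson LeastI_ex)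

lemma walk0: "u \<in> V \<Longrightarrow> is_walk V E u u 0"
  unfolding is_walk_def by (rule exI[of _ "\<lambda>_. u"]) auto

lemma gdist_self: "u \<in> V \<Longrightarrow> gdist V E u u = 0"
  using gdist_le[OF walk0] by fastforce

lemma walk0_eq: "is_walk V E u v 0 \<Longrightarrow> u = v"
  unfolding is_walk_def by auto

lemma gdist0: "connected_graph V E \<Longrightarrow> u \<in> V \<Longrightarrow> v \<in> V \<Longrightarrow> gdist V E u v = 0 \<Longrightarrow> u = v"
  using walk_gdist walk0_eq by fastforce

lemma walk1: "simple_graph V E \<Longrightarrow> E u v \<Longrightarrow> is_walk V E u v 1"
  unfolding is_walk_def simple_graph_def
  by (rule exI[of _ "\<lambda>i. if i = 0 then u else v"]) auto

lemma walk1_E: "is_walk V E u v 1 \<Longrightarrow> E u v"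
  unfolding is_walk_def by auto

lemma gdist1: "simple_graph V E \<Longrightarrow> connected_graph V E \<Longrightarrow> u \<in> V \<Longrightarrow> v \<in> V \<Longrightarrow>
   gdist V E u v = 1 \<longleftrightarrow> E u v"
proof
  assume "connected_graph V E" "u \<in> V" "v \<in> V" "gdist V E u v = 1"
  then show "E u v" using walk_gdist walk1_E by fastforce
next
  assume s: "simple_graph V E" and c: "connected_graph V E" and uv: "u \<in> V" "v \<in> V" and e: "E u v"
  have "gdist V E u v \<le> 1" using gdist_le[OF walk1[OF s e]] .
  moreover have "gdist V E u v \<noteq> 0"
    using gdist0[OF c uv] e s unfolding simple_graph_def by blast
  ultimately show "gdist V E u v = 1" by linarith
qed

lemma tri: "connected_graph V E \<Longrightarrow> p \<in> V \<Longrightarrow> y \<in> V \<Longrightarrow> z \<in> V \<Longrightarrow> E y z \<Longrightarrow>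
   gdist V E p z \<le> gdist V E p y + 1"
  using walk_gdist walk_ext gdist_le by fastforce

theorem lemma4p2:
  fixes V :: "'v set" and E :: "'v \<Rightarrow> 'v \<Rightarrow> bool"
    and d :: nat and a b c :: "nat \<Rightarrow> nat" and u v :: 'v
  assumes "distance_regular V E d a b c"
    and "d \<ge> 2"
    and "u \<in> V" and "v \<in> V" and "u \<noteq> v"
  shows "int (card {x\<in>V. gdist V E x u \<noteq> gdist V E x v}) \<ge> int (b 0) - int (c 2)"
proof -
  have s: "simple_graph V E" and cn: "connected_graph V E" and dm: "diameter V E = d"
    using assms(1) by (auto simp: distance_regular_def)
  have DR: "\<And>i p q. i \<le> d \<Longrightarrow> p \<in> V \<Longrightarrow> q \<in> V \<Longrightarrow> gdist V E p q = i \<Longrightarrow>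
        card {x\<in>V. E q x \<and> gdist V E p x + 1 = i} = c i \<and>
        card {x\<in>V. E q x \<and> gdist V E p x = i} = a i \<and>
        card {x\<in>V. E q x \<and> gdist V E p x = i + 1} = b i"
    using assms(1) unfolding distance_regular_def by blast
  have fin: "finite V" and sym: "\<And>x y. E x y \<Longrightarrow> E y x" and irr: "\<And>x. \<not> E x x"
    and inV: "\<And>x y. E x y \<Longrightarrow> x \<in> V \<and> y \<in> V"
    using s unfolding simple_graph_def by auto
  have g1: "\<And>x y. x \<in> V \<Longrightarrow> y \<in> V \<Longrightarrow> gdist V E x y = 1 \<longleftrightarrow> E x y"
    using gdist1[OF s cn] by blast
  define N where "N x = {y\<in>V. E x y}" for x
  have finN: "finite (N x)" for x using fin unfolding N_def by auto
  have cardN: "card (N x) = b 0" if "x \<in> V" for x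
  proof -
    have "card {y\<in>V. E x y \<and> gdist V E x y = 0 + 1} = b 0"
      using DR[of 0 x x] that gdist_self[OF that] by auto
    moreover have "{y\<in>V. E x y \<and> gdist V E x y = 0 + 1} = N x"
      using g1 that unfolding N_def by auto
    ultimately show ?thesis by simp
  qed
  define D where "D = {x\<in>V. gdist V E x u \<noteq> gdist V E x v}"
  have finD: "finite D" using fin unfolding D_def by auto
  have sub1: "N u - N v \<subseteq> D"
  proof
    fix x assume "x \<in> N u - N v"
    then have x: "x \<in> V" "E u x" "\<not> E v x" unfolding N_def by auto
    have "gdist V E x u = 1" using g1[of x u] x sym assms(3) by blast
    moreover have "gdist V E x v \<noteq> 1" using g1[of x v] x sym assms(4) by blast
    ultimately show "x \<in> D" unfolding D_def using x by auto
  qed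
  have sub2: "N v - N u \<subseteq> D"
  proof
    fix x assume "x \<in> N v - N u"
    then have x: "x \<in> V" "E v x" "\<not> E u x" unfolding N_def by auto
    have "gdist V E x v = 1" using g1[of x v] x sym assms(4) by blast
    moreover have "gdist V E x u \<noteq> 1" using g1[of x u] x sym assms(3) by blast
    ultimately show "x \<in> D" unfolding D_def using x by auto
  qed
  have fS: "finite {gdist V E p q |p q. p \<in> V \<and> q \<in> V}"
    using finite_image_set2[of "\<lambda>p. p \<in> V" "\<lambda>q. q \<in> V" "gdist V E"] fin by simp
  have id: "gdist V E u v \<le> d"
    using dm assms(3,4) fS unfolding diameter_def by (metis (mono_tags, lifting) Max_ge mem_Collect_eq)
  have i0: "gdist V E u v \<noteq> 0" using gdist0[OF cn assms(3,4)] assms(5) by blast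
  have diffN: "card (N u - N v) = b 0 - card (N u \<inter> N v)"
    using card_Diff_subset_Int[of "N u" "N v"] finN cardN assms(3) by (simp add: Int_commute)
  have dD1: "card (N u - N v) \<le> card D" using card_mono[OF finD sub1] .
  consider "gdist V E u v = 1" | "gdist V E u v = 2" | "gdist V E u v \<ge> 3" using i0 by linarith
  then show ?thesis
  proof cases
    case 3
    have "N u \<inter> N v = {}"
    proof (rule ccontr)
      assume "N u \<inter> N v \<noteq> {}"
      then obtain x where x: "x \<in> V" "E u x" "E v x" unfolding N_def by auto
      have "gdist V E u v \<le> gdist V E u x + 1" using tri[OF cn assms(3) x(1) assms(4)] sym x by blast
      moreover have "gdist V E u x = 1" using g1[of u x] x assms(3) by blast
      ultimately show False using 3 by simp
    qed
    then show ?thesis using diffN dD1 D_def by simp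
  next
    case 2
    have "N u \<inter> N v = {x\<in>V. E v x \<and> gdist V E u x + 1 = 2}"
      using g1 assms(3) unfolding N_def by auto
    then have "card (N u \<inter> N v) = c 2" using DR[of 2 u v] 2 assms by simp
    then show ?thesis using diffN dD1 D_def by simp
  next
    case 1
    define A where "A = N u \<inter> N v"
    have Aeq: "A = {x\<in>V. E v x \<and> gdist V E u x = 1}"
      using g1 assms(3) unfolding A_def N_def by auto
    have cA: "card A = a 1" using DR[of 1 u v] 1 assms Aeq by simp
    have b1: "card {x\<in>V. E v x \<and> gdist V E u x = 1 + 1} = b 1" using DR[of 1 u v] 1 assms by simp
    have "b 1 \<noteq> 0"
    proof
      assume b0: "b 1 = 0"
      have nob: "\<And>p y z. p \<in> V \<Longrightarrow> y \<in> V \<Longrightarrow> z \<in> V \<Longrightarrow> gdist V E p y = 1 \<Longrightarrow> E y z \<Longrightarrow> gdist V E p z \<noteq> 2"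
      proof -
        fix p y z assume h: "p \<in> V" "y \<in> V" "z \<in> V" "gdist V E p y = 1" "E y z"
        have "card {x\<in>V. E y x \<and> gdist V E p x = 1 + 1} = 0" using DR[of 1 p y] h assms(2) b0 by simp
        then have "{x\<in>V. E y x \<and> gdist V E p x = 1 + 1} = {}" using fin by simp
        then show "gdist V E p z \<noteq> 2" using h by auto
      qed
      have all: "gdist V E p z \<le> 1" if pz: "p \<in> V" "z \<in> V" for p z
      proof -
        obtain n where "is_walk V E p z n" using cn pz unfolding connected_graph_def by blast
        then obtain q where q: "q 0 = p" "q n = z" "\<forall>i\<le>n. q i \<in> V" "\<forall>i<n. E (q i) (q (Suc i))"
          unfolding is_walk_def by blast
        have "\<forall>i\<le>n. gdist V E p (q i) \<le> 1"
        proof (intro allI impI)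
          fix i assume "i \<le> n"
          then show "gdist V E p (q i) \<le> 1"
          proof (induction i)
            case 0 then show ?case using gdist_self[OF pz(1)] q by simp
          next
            case (Suc i)
            have qi: "q i \<in> V" "q (Suc i) \<in> V" "E (q i) (q (Suc i))" using q Suc.prems by auto
            have ih: "gdist V E p (q i) \<le> 1" using Suc by simp
            have "gdist V E p (q (Suc i)) \<le> gdist V E p (q i) + 1" using tri[OF cn pz(1) qi] .
            moreover have "gdist V E p (q i) = 1 \<Longrightarrow> gdist V E p (q (Suc i)) \<noteq> 2"
              using nob[of p "q i" "q (Suc i)"] pz(1) qi by blast
            ultimately show ?case using ih by linarith
          qed
        qed
        then show ?thesis using q by auto
      qed
      have "diameter V E \<le> 1"
        unfolding diameter_def using fS assms(3) all
        by (subst Max_le_iff) auto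
      then show False using dm assms(2) by simp
    qed
    then have "{x\<in>V. E v x \<and> gdist V E u x = 1 + 1} \<noteq> {}" using b1 by (metis card.empty)
    then obtain w where w: "w \<in> V" "E v w" "gdist V E u w = 2" by auto
    have nuw: "\<not> E u w" using g1[of u w] w assms(3) by auto
    define C where "C = N u \<inter> N w"
    have "C = {x\<in>V. E w x \<and> gdist V E u x + 1 = 2}"
      using g1 assms(3) unfolding C_def N_def by auto
    then have cC: "card C = c 2" using DR[of 2 u w] w assms by simp
    have "N v \<inter> N w = {x\<in>V. E w x \<and> gdist V E v x = 1}"
      using g1 assms(4) unfolding N_def by auto
    then have cVW: "card (N v \<inter> N w) = a 1" using DR[of 1 v w] w assms g1 by simp
    have finA: "finite A" using finN unfolding A_def by auto
    have e1: "card (A \<inter> N w) + 1 \<le> c 2"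
    proof -
      have "insert v (A \<inter> N w) \<subseteq> C" using sym 1 g1 assms w unfolding A_def C_def N_def by auto
      moreover have "v \<notin> A \<inter> N w" using irr unfolding A_def N_def by auto
      ultimately show ?thesis using card_mono[of C] finN finA cC unfolding C_def
        by (metis Suc_eq_plus1 card_insert_disjoint finite_Int finite_subset)
    qed
    have e2: "card (A - N w) + 2 \<le> card (N v - N w)"
    proof -
      have "insert u (insert w (A - N w)) \<subseteq> N v - N w"
        using sym irr nuw assms w 1 g1 unfolding A_def N_def by auto
      moreover have uw: "u \<noteq> w" using assms(3) w(3) gdist_self[of u V E] by fastforce
      moreover have "u \<notin> insert w (A - N w)" "w \<notin> A - N w"
        using irr nuw uw unfolding A_def N_def by auto
      ultimately show ?thesis using card_mono[of "N v - N w"] finN finA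
        by (metis (no_types, lifting) add_2_eq_Suc' card_insert_disjoint finite_Diff finite_insert finite_subset)
    qed
    have e3: "card (N v - N w) + a 1 = b 0"
      using card_Diff_subset_Int[of "N v" "N w"] finN cardN assms(4) cVW
        card_mono[of "N v" "N v \<inter> N w"] by (simp add: Int_commute)
    have e4: "card A = card (A \<inter> N w) + card (A - N w)"
      using card_Un_disjoint[of "A \<inter> N w" "A - N w"] finA by (metis Int_Diff_Un Int_Diff_disjoint finite_Diff finite_Int)
    have key: "2 * a 1 + 3 \<le> b 0 + c 2" using e1 e2 e3 e4 cA by linarith
    have diffN2: "card (N v - N u) = b 0 - card (N v \<inter> N u)"
      using card_Diff_subset_Int[of "N v" "N u"] finN cardN assms(4) by (simp add: Int_commute)
    have "card ((N u - N v) \<union> (N v - N u)) = card (N u - N v) + card (N v - N u)"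
      by (rule card_Un_disjoint) (auto simp: finN)
    moreover have "card ((N u - N v) \<union> (N v - N u)) \<le> card D"
      using card_mono[OF finD] sub1 sub2 by blast
    moreover have "card (N u \<inter> N v) = a 1" "card (N v \<inter> N u) = a 1"
      using cA A_def by (auto simp: Int_commute)
    moreover have "a 1 \<le> b 0" using e3 by linarith
    ultimately show ?thesis using diffN diffN2 key D_def by simp
  qed
qed

end
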